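(* Let $\Gamma=(V,E)$ be a finite connected undirected graph and let $(u_{ij})$ be the generators of $C(G_{aut}^+(\Gamma))$. Let $i,j,k,l\in V$ with $d(i,k)=d(j,l)=m$, let $p\neq j$ be a vertex with $d(p,l)=m$, and let $q$ be a vertex with $d(q,l)=s$ and $d(j,q)\neq d(q,p)$. Then $$u_{ij}\Big(\sum_{t\in V:\ d(t,j)=d(t,p)=m,\ d(t,q)=s}u_{kt}\Big)u_{ip}=0.$$ In particular, if $l$ is the only vertex $t$ satisfying $d(t,q)=s$, $d(t,j)=m$ and $d(t,p)=m$, then $u_{ij}u_{kl}u_{ip}=0$.
   Context: $\Gamma$ is a finite simple connected undirected graph on $V=\{1,\dots,n\}$, $d$ the graph distance. $C(G_{aut}^+(\Gamma))$ is the universal unital $C^*$-algebra generated by $u_{ij}$, $1\le i,j\le n$, with relations: (R1) $u_{ij}=u_{ij}^*=u_{ij}^2$; (R2) $\sum_{l} u_{il}=1=\sum_{l} u_{li}$ for all $i$; (R3) $u_{ij}u_{kl}=u_{kl}u_{ij}=0$ whenever exactly one of $(i,k)\in E$, $(j,l)\in E$ holds. *)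

theory Defs
  imports Complex_Main
begin

text \<open>Isabelle/HOL has no complex-vector-space class,
so complex scalar multiplication is an explicit operation cscale, compatible with the
inherited real scalar multiplication; adj is the involution.\<close>

class cstar_algebra = real_normed_algebra_1 + banach +
  fixes adj :: "'a \<Rightarrow> 'a"
    and cscale :: "complex \<Rightarrow> 'a \<Rightarrow> 'a"
  assumes cscale_one: "cscale 1 x = x"
    and cscale_assoc: "cscale a (cscale b x) = cscale (a * b) x"
    and cscale_add_left: "cscale (a + b) x = cscale a x + cscale b x"
    and cscale_add_right: "cscale a (x + y) = cscale a x + cscale a y"
    and cscale_of_real: "cscale (of_real r) x = scaleR r x"
    and cscale_mult_left: "cscale a (x * y) = cscale a x * y"
    and cscale_mult_right: "cscale a (x * y) = x * cscale a y"
    and norm_cscale: "norm (cscale a x) = cmod a * norm x"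
    and adj_adj: "adj (adj x) = x"
    and adj_add: "adj (x + y) = adj x + adj y"
    and adj_mult: "adj (x * y) = adj y * adj x"
    and adj_cscale: "adj (cscale a x) = cscale (cnj a) (adj x)"
    and cstar_identity: "norm (adj x * x) = norm x ^ 2"

definition vertices :: "nat \<Rightarrow> nat set" where
  "vertices n = {1..n}"

definition edge_rel :: "nat \<Rightarrow> (nat \<Rightarrow> nat \<Rightarrow> bool) \<Rightarrow> (nat \<times> nat) set" where
  "edge_rel n E = {(x, y). x \<in> vertices n \<and> y \<in> vertices n \<and> E x y}"

definition simple_connected_graph :: "nat \<Rightarrow> (nat \<Rightarrow> nat \<Rightarrow> bool) \<Rightarrow> bool" where
  "simple_connected_graph n E \<longleftrightarrow> n \<ge> 1 \<and>
     (\<forall>x y. E x y \<longrightarrow> E y x) \<and> (\<forall>x. \<not> E x x) \<and>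
     (\<forall>x\<in>vertices n. \<forall>y\<in>vertices n. (x, y) \<in> (edge_rel n E)\<^sup>*)"

definition gdist :: "nat \<Rightarrow> (nat \<Rightarrow> nat \<Rightarrow> bool) \<Rightarrow> nat \<Rightarrow> nat \<Rightarrow> nat" where
  "gdist n E x y = (LEAST m. (x, y) \<in> (edge_rel n E) ^^ m)"

definition qaut_relations ::
  "nat \<Rightarrow> (nat \<Rightarrow> nat \<Rightarrow> bool) \<Rightarrow> (nat \<Rightarrow> nat \<Rightarrow> 'a::cstar_algebra) \<Rightarrow> bool" where
  "qaut_relations n E u \<longleftrightarrow>
     (\<forall>i\<in>vertices n. \<forall>j\<in>vertices n. u i j = adj (u i j) \<and> u i j = u i j * u i j) \<and>
     (\<forall>i\<in>vertices n. (\<Sum>l\<in>vertices n. u i l) = 1 \<and> (\<Sum>l\<in>vertices n. u l i) = 1) \<and>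
     (\<forall>i\<in>vertices n. \<forall>j\<in>vertices n. \<forall>k\<in>vertices n. \<forall>l\<in>vertices n.
        (E i k \<noteq> E j l) \<longrightarrow> u i j * u k l = 0 \<and> u k l * u i j = 0)"

end

theory Submission
  imports Defs
begin

lemma adj_zero[simp]: "adj (0::'a::cstar_algebra) = 0"
  by (metis add_cancel_right_right adj_add)
lemma adj_minus[simp]: "adj (- x) = - adj (x::'a::cstar_algebra)"
  by (metis add.right_inverse adj_add adj_zero eq_neg_iff_add_eq_0)
lemma adj_diff[simp]: "adj (x - y) = adj x - adj (y::'a::cstar_algebra)"
  by (metis adj_add adj_minus diff_conv_add_uminus)
lemma adj_one[simp]: "adj 1 = (1::'a::cstar_algebra)"
  by (metis adj_adj adj_mult mult_1_left mult_1_right)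
lemma adj_scaleR[simp]: "adj (scaleR r x) = scaleR r (adj (x::'a::cstar_algebra))"
  by (metis adj_cscale cscale_of_real complex_cnj_complex_of_real)
lemma adj_sum: "adj (sum f A) = (\<Sum>a\<in>A. adj (f a::'a::cstar_algebra))"
  by (induction A rule: infinite_finite_induct) (auto simp: adj_add)
lemma norm_proj: assumes "adj p = (p::'a::cstar_algebra)" "p * p = p" shows "norm p \<le> 1"
proof -
  have "norm p ^ 2 = norm p" using cstar_identity[of p] assms by simp
  then have "norm p = 0 \<or> norm p = 1" by (simp add: power2_eq_square)
  then show ?thesis by auto
qed
lemma binom1: "(1 + (X::'a::real_normed_algebra_1)) ^ n = (\<Sum>k\<le>n. real (n choose k) *\<^sub>R X ^ k)"
proof (induction n)
  case 0 then show ?case by simp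
next
  case (Suc n)
  have "(1 + X) ^ Suc n = (\<Sum>k\<le>n. real (n choose k) *\<^sub>R X ^ k) + (\<Sum>k\<le>n. real (n choose k) *\<^sub>R X ^ Suc k)"
  proof -
    have "(1+X)^Suc n = (1+X)^n + X * (1+X)^n" by (simp add: distrib_right)
    also have "X * (1+X)^n = (\<Sum>k\<le>n. real (n choose k) *\<^sub>R X ^ Suc k)"
      unfolding Suc.IH by (simp add: sum_distrib_left mult_scaleR_right)
    finally show ?thesis using Suc.IH by simp
  qed
  also have "(\<Sum>k\<le>n. real (n choose k) *\<^sub>R X ^ Suc k) = (\<Sum>k\<le>Suc n. real (if k = 0 then 0 else n choose (k - 1)) *\<^sub>R X ^ k) "
    by (subst sum.atMost_Suc_shift) simp
  also have "(\<Sum>k\<le>n. real (n choose k) *\<^sub>R X ^ k) = (\<Sum>k\<le>Suc n. real (n choose k) *\<^sub>R X ^ k)"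
    by simp
  also have "(\<Sum>k\<le>Suc n. real (n choose k) *\<^sub>R X ^ k) + (\<Sum>k\<le>Suc n. real (if k = 0 then 0 else n choose (k - 1)) *\<^sub>R X ^ k)
     = (\<Sum>k\<le>Suc n. real (Suc n choose k) *\<^sub>R X ^ k)"
    unfolding sum.distrib[symmetric]
  proof (rule sum.cong[OF refl])
    fix k assume "k \<in> {..Suc n}"
    show "real (n choose k) *\<^sub>R X ^ k + real (if k = 0 then 0 else n choose (k - 1)) *\<^sub>R X ^ k = real (Suc n choose k) *\<^sub>R X ^ k"
      by (cases k) (auto simp: scaleR_add_left[symmetric])
  qed
  finally show ?case .
qed

lemma cscale_power: "(cscale z (X::'a::cstar_algebra))^k = cscale (z^k) (X^k)"
proof (induction k)
  case 0 then show ?case by (metis cscale_one power_0)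
next
  case (Suc k)
  then show ?case
    by (simp add: cscale_mult_left[symmetric] cscale_mult_right[symmetric] cscale_assoc mult.commute)
qed

lemma cscale_real: "r *\<^sub>R (cscale z (X::'a::cstar_algebra)) = cscale (of_real r * z) X"
  by (metis cscale_assoc cscale_of_real)

lemma binomC: "(1 + cscale z (X::'a::cstar_algebra)) ^ n = (\<Sum>k\<le>n. cscale (of_nat (n choose k) * z^k) (X ^ k))"
  unfolding binom1 cscale_power cscale_real by simp

lemma pow_comm1: "(1 + X)^n * X = X * (1 + (X::'a::ring_1))^n"
proof -
  have "(1+X)^n * X = (1+X)^n * (1+X) - (1+X)^n" by (simp add: algebra_simps)
  also have "\<dots> = (1+X)*(1+X)^n - (1+X)^n" by (simp only: power_commutes)
  also have "\<dots> = X*(1+X)^n" by (simp add: algebra_simps)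
  finally show ?thesis .
qed

lemma e_pow_left: assumes "e * X = (X::'a::ring_1)" shows "e * (1 + X)^n = e + ((1 + X)^n - 1)"
proof (induction n)
  case 0 then show ?case by simp
next
  case (Suc n)
  have "e * (1+X)^Suc n = (e * (1+X)^n) * (1+X)" by (simp only: power_Suc2 mult.assoc)
  also have "\<dots> = e + ((1 + X)^Suc n - 1)" unfolding Suc.IH
    by (simp add: algebra_simps assms power_Suc2 pow_comm1)
  finally show ?case .
qed

lemma e_pow_right: assumes "X * e = (X::'a::ring_1)" shows "(1 + X)^n * e = e + ((1 + X)^n - 1)"
proof (induction n)
  case 0 then show ?case by simp
next
  case (Suc n)
  have "(1+X)^Suc n * e = (1+X) * ((1+X)^n * e)" by (simp add: mult.assoc)
  also have "\<dots> = e + ((1 + X)^Suc n - 1)" unfolding Suc.IH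
    by (simp add: algebra_simps assms)
  finally show ?case .
qed

lemma e_pow: assumes "e * e = e" "e * X = X" "X * e = X" "n \<ge> 1"
  shows "(e + X)^n = e + ((1 + X)^n - (1::'a::ring_1))"
  using assms(4)
proof (induction n rule: dec_induct)
  case base then show ?case by simp
next
  case (step n)
  have "(e + X)^Suc n = (e + ((1 + X)^n - 1)) * (e + X)" unfolding power_Suc2 step.IH ..
  also have "\<dots> = e * e + e * X + (1 + X)^n * e + (1+X)^n * X - e - X"
    by (simp add: algebra_simps)
  also have "\<dots> = e + ((1 + X)^Suc n - 1)"
    unfolding e_pow_right[OF assms(3)] by (simp add: assms algebra_simps power_Suc2 pow_comm1)
  finally show ?case .
qed


lemma coeffc: "(1/4) * (s^k - (-s)^k) + (-\<i>/4) * ((\<i>*s)^k - (-\<i>*s)^k) = (if k mod 4 = 1 then s^k else (0::complex))"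
proof -
  obtain q r where k: "k = 4*q + r" and r: "r < 4" by (metis mod_less_divisor div_mult_mod_eq mult.commute zero_less_numeral)
  have p1: "(-1::complex)^k = (-1)^r" unfolding k power_add power_mult by simp
  have p2: "\<i>^k = \<i>^r" unfolding k power_add power_mult by simp
  have p3: "(-\<i>)^k = (-\<i>)^r" unfolding k power_add power_mult by simp
  have km: "k mod 4 = r" using k r by simp
  have e: "(1/4) * (s^k - (-s)^k) + (-\<i>/4) * ((\<i>*s)^k - (-\<i>*s)^k)
     = s^k * ((1/4) * (1 - (-1)^k) + (-\<i>/4) * (\<i>^k - (-\<i>)^k))"
  proof -
    have a: "(-s)^k = (-1)^k * s^k" by (metis mult_minus1 power_mult_distrib)
    have b: "(-\<i>*s)^k = (-\<i>)^k * s^k" by (simp only: power_mult_distrib)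
    have c: "(\<i>*s)^k = \<i>^k * s^k" by (simp only: power_mult_distrib)
    show ?thesis unfolding a b c by algebra
  qed
  have "r = 0 \<or> r = 1 \<or> r = 2 \<or> r = 3" using r by auto
  then show ?thesis unfolding e p1 p2 p3 km
    by (auto simp: numeral_3_eq_3 numeral_2_eq_2 algebra_simps)
qed

lemma tail_aux: "N \<ge> 4 \<Longrightarrow> (\<Sum>k\<le>N. if 5 \<le> k then 2^k / fact k else 0) + 3/2 * 2^(Suc N) / fact (Suc N) \<le> (2/5::real)"
proof (induction N rule: dec_induct)
  case base
  have "(\<Sum>k\<le>4. if 5 \<le> k then 2^k / fact k else 0) = (0::real)" by (intro sum.neutral) auto
  then show ?case by (simp add: fact_numeral)
next
  case (step N)
  have f: "fact (Suc (Suc N)) = real (Suc (Suc N)) * fact (Suc N)" by simp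
  have pos: "(0::real) < 2^(Suc N) / fact (Suc N)" by simp
  have "3/2 * 2^(Suc (Suc N)) / fact (Suc (Suc N)) = (3 / real (Suc (Suc N))) * (2^(Suc N) / fact (Suc N))"
    unfolding f by (simp add: field_simps)
  also have "\<dots> \<le> (1/2) * (2^(Suc N) / fact (Suc N))"
    using step(1) pos by (intro mult_right_mono) (auto simp: field_simps)
  finally have "3/2 * 2^(Suc (Suc N)) / fact (Suc (Suc N)) \<le> (1/2) * (2^(Suc N) / fact (Suc N) :: real)" .
  moreover have "(\<Sum>k\<le>Suc N. if 5 \<le> k then 2^k / fact k else (0::real)) = (\<Sum>k\<le>N. if 5 \<le> k then 2^k / fact k else 0) + 2^Suc N/fact (Suc N)"
    using step(1) by simp
  ultimately show ?case using step(3) by linarith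
qed

lemma tail: "(\<Sum>k\<le>N. if 5 \<le> k then 2^k / fact k else 0) \<le> (2/5::real)"
proof (cases "N \<ge> 4")
  case True
  have "0 \<le> 3/2 * 2^(Suc N) / (fact (Suc N)::real)" by simp
  then show ?thesis using tail_aux[OF True] by linarith
next
  case False
  then have "(\<Sum>k\<le>N. if 5 \<le> k then 2^k / fact k else 0) = (0::real)" by (intro sum.neutral) auto
  then show ?thesis by simp
qed


lemma cscale_zero_left[simp]: "cscale 0 (x::'a::cstar_algebra) = 0"
  by (metis cscale_of_real of_real_0 scaleR_zero_left)
lemma cscale_minus_left: "cscale (- a) (x::'a::cstar_algebra) = - cscale a x"
  by (metis add.right_inverse add_eq_0_iff cscale_add_left cscale_zero_left)
lemma cscale_diff_left: "cscale (a - b) (x::'a::cstar_algebra) = cscale a x - cscale b x"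
  by (metis cscale_add_left cscale_minus_left diff_conv_add_uminus)
lemma cscale_zero_right[simp]: "cscale a (0::'a::cstar_algebra) = 0"
  by (metis add_cancel_right_right cscale_add_right)
lemma cscale_minus_right: "cscale a (- x) = - cscale a (x::'a::cstar_algebra)"
  by (metis add.right_inverse add_eq_0_iff cscale_add_right cscale_zero_right)
lemma cscale_diff_right: "cscale a (x - y) = cscale a x - cscale a (y::'a::cstar_algebra)"
  by (metis cscale_add_right cscale_minus_right diff_conv_add_uminus)
lemma cscale_sum_right: "cscale a (\<Sum>k\<in>A. f k) = (\<Sum>k\<in>A. cscale a (f k::'a::cstar_algebra))"
  by (induction A rule: infinite_finite_induct) (auto simp: cscale_add_right)
lemma sum_cscale_diff: "(\<Sum>k\<in>A. cscale (f k) (X k)) - (\<Sum>k\<in>A. cscale (g k) (X k)) = (\<Sum>k\<in>A. cscale (f k - g k) (X k::'a::cstar_algebra))"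
  by (simp add: sum_subtractf[symmetric] cscale_diff_left)
lemma sum_cscale_add: "(\<Sum>k\<in>A. cscale (f k) (X k)) + (\<Sum>k\<in>A. cscale (g k) (X k)) = (\<Sum>k\<in>A. cscale (f k + g k) (X k::'a::cstar_algebra))"
  by (simp add: sum.distrib[symmetric] cscale_add_left)
lemma cscale_sum_cscale: "cscale a (\<Sum>k\<in>A. cscale (f k) (X k)) = (\<Sum>k\<in>A. cscale (a * f k) (X k::'a::cstar_algebra))"
  by (simp add: cscale_sum_right cscale_assoc)

lemma norm_sq_le1: "norm (x::'a::real_normed_vector) ^ 2 \<le> 1 \<Longrightarrow> norm x \<le> 1"
  by (smt (verit, best) mult_le_cancel_left1 norm_ge_zero power2_eq_square)

lemma cscale_nat_real: "cscale (of_nat c * of_real x) (X::'a::cstar_algebra) = (real c * x) *\<^sub>R X"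
  by (metis cscale_of_real of_real_mult of_real_of_nat_eq)

lemma lemK:
  fixes e Y :: "'a::cstar_algebra"
  assumes ee: "e*e = e" and eY: "e*Y = Y" and Ye: "Y*e = Y" and aY: "adj Y = Y" and ae: "adj e = e"
    and n1: "norm (e + Y) \<le> 1" and n2: "norm (e - Y) \<le> 1"
  shows "Y = 0"
proof (rule ccontr)
  assume Y0: "Y \<noteq> 0"
  define \<delta> where "\<delta> = norm Y"
  have dpos: "\<delta> > 0" using Y0 by (simp add: \<delta>_def)
  have conv: "norm (e + s *\<^sub>R Y) \<le> 1" if s: "\<bar>s\<bar> \<le> 1" for s :: real
  proof -
    have "e + s *\<^sub>R Y = ((1+s)/2) *\<^sub>R (e + Y) + ((1-s)/2) *\<^sub>R (e - Y)"
    proof -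
      have "((1+s)/2) *\<^sub>R (e + Y) + ((1-s)/2) *\<^sub>R (e - Y) = ((1+s)/2 + (1-s)/2) *\<^sub>R e + ((1+s)/2 - (1-s)/2) *\<^sub>R Y"
        by (simp only: scaleR_add_left scaleR_diff_left scaleR_add_right scaleR_diff_right) (simp add: algebra_simps)
      also have "(1+s)/2 + (1-s)/2 = (1::real)" by (simp add: field_simps)
      also have "(1+s)/2 - (1-s)/2 = (s::real)" by (simp add: field_simps)
      finally show ?thesis by simp
    qed
    also have "norm \<dots> \<le> norm (((1+s)/2) *\<^sub>R (e + Y)) + norm (((1-s)/2) *\<^sub>R (e - Y))"
      by (rule norm_triangle_ineq)
    also have "\<dots> = ((1+s)/2) * norm (e + Y) + ((1-s)/2) * norm (e - Y)"
      using s by simp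
    also have "\<dots> \<le> ((1+s)/2) * 1 + ((1-s)/2) * 1"
      using s n1 n2 by (intro add_mono mult_left_mono) auto
    finally show ?thesis by (simp add: field_simps)
  qed
  define W where "W = cscale \<i> Y"
  have eW: "e*W = W" by (simp add: W_def cscale_mult_right[symmetric] eY)
  have We: "W*e = W" by (simp add: W_def cscale_mult_left[symmetric] Ye)
  have aW: "adj W = - W" by (simp add: W_def adj_cscale aY cscale_minus_left)
  have WW: "W*W = -(Y*Y)"
  proof -
    have "W*W = cscale (\<i>*\<i>) (Y*Y)"
      by (simp add: W_def cscale_mult_left[symmetric] cscale_mult_right[symmetric] cscale_assoc)
    also have "\<dots> = -(Y*Y)" by (simp add: cscale_minus_left cscale_one)
    finally show ?thesis .
  qed
  have convW: "norm (e + s *\<^sub>R W) \<le> 1" if s: "\<bar>s\<bar> \<le> 1" for s :: real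
  proof -
    have a: "adj (e + s *\<^sub>R W) * (e + s *\<^sub>R W) = e + (s*s) *\<^sub>R (Y*Y)"
      by (simp add: adj_add aW ae algebra_simps eW We ee WW)
    have b: "e + (s*s) *\<^sub>R (Y*Y) = (1/2) *\<^sub>R ((e + s *\<^sub>R Y)*(e + s *\<^sub>R Y) + (e + (-s) *\<^sub>R Y)*(e + (-s) *\<^sub>R Y))"
    proof -
      have "(e + s *\<^sub>R Y)*(e + s *\<^sub>R Y) + (e + (-s) *\<^sub>R Y)*(e + (-s) *\<^sub>R Y) = 2 *\<^sub>R (e + (s*s) *\<^sub>R (Y*Y))"
        by (simp add: algebra_simps eY Ye ee scaleR_2) (simp only: scaleR_add_left[symmetric], simp)
      then show ?thesis by simp
    qed
    have c1: "norm ((e + s *\<^sub>R Y)*(e + s *\<^sub>R Y)) \<le> 1"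
      using conv[OF s] by (metis mult_le_one norm_ge_zero norm_mult_ineq order_trans)
    have c2: "norm ((e + (-s) *\<^sub>R Y)*(e + (-s) *\<^sub>R Y)) \<le> 1"
      using conv[of "-s"] s by (metis abs_minus_cancel mult_le_one norm_ge_zero norm_mult_ineq order_trans)
    have "norm (e + (s*s) *\<^sub>R (Y*Y)) \<le> 1" unfolding b
      using norm_triangle_ineq[of "(e + s *\<^sub>R Y)*(e + s *\<^sub>R Y)" "(e + (-s) *\<^sub>R Y)*(e + (-s) *\<^sub>R Y)"] c1 c2
      by simp
    then have "norm (e + s *\<^sub>R W) ^ 2 \<le> 1" using cstar_identity[of "e + s *\<^sub>R W"] a by simp
    then show ?thesis by (rule norm_sq_le1)
  qed
  have main: "norm (\<Sum>k\<le>n. if k mod 4 = 1 then (real (n choose k) * s^k) *\<^sub>R Y^k else 0) \<le> 1"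
    if n: "n \<ge> 1" and s: "\<bar>s\<bar> \<le> 1" for n :: nat and s :: real
  proof -
    define T where "T z = (1 + cscale z Y)^n" for z
    have Tdiff: "T z - T (-z) = (e + cscale z Y)^n - (e + cscale (-z) Y)^n" for z
    proof -
      have "e * cscale w Y = cscale w Y" "cscale w Y * e = cscale w Y" for w
        by (simp_all add: cscale_mult_right[symmetric] cscale_mult_left[symmetric] eY Ye)
      then show ?thesis unfolding T_def using e_pow[OF ee _ _ n] by simp
    qed
    have c1: "cscale (complex_of_real s) Y = s *\<^sub>R Y" by (simp add: cscale_of_real)
    have c2: "cscale (- complex_of_real s) Y = (-s) *\<^sub>R Y" by (simp add: cscale_of_real flip: of_real_minus)
    have c3: "cscale (\<i> * complex_of_real s) Y = s *\<^sub>R W"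
      by (simp add: W_def cscale_real mult.commute)
    have c4: "cscale (- (\<i> * complex_of_real s)) Y = (-s) *\<^sub>R W"
      by (simp add: W_def cscale_real mult.commute)
    define G where "G = cscale (1/4) (T (complex_of_real s) - T (- complex_of_real s))
       + cscale (-\<i>/4) (T (\<i> * complex_of_real s) - T (- (\<i> * complex_of_real s)))"
    have pw: "norm ((e + x)^n) \<le> 1" if "norm (e + x) \<le> 1" for x :: 'a
      by (metis norm_ge_zero norm_power_ineq order_trans power_le_one that)
    have "norm G \<le> norm (cscale (1/4) (T (complex_of_real s) - T (- complex_of_real s)))
       + norm (cscale (-\<i>/4) (T (\<i> * complex_of_real s) - T (- (\<i> * complex_of_real s))))"
      unfolding G_def by (rule norm_triangle_ineq)
    also have "\<dots> = (1/4) * norm ((e + s *\<^sub>R Y)^n - (e + (-s) *\<^sub>R Y)^n) + (1/4) * norm ((e + s *\<^sub>R W)^n - (e + (-s) *\<^sub>R W)^n)"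
      unfolding Tdiff c1 c2 c3 c4 norm_cscale by simp
    also have "\<dots> \<le> (1/4) * 2 + (1/4) * 2"
    proof (intro add_mono mult_left_mono)
      show "norm ((e + s *\<^sub>R Y)^n - (e + (-s) *\<^sub>R Y)^n) \<le> 2"
        using norm_triangle_ineq4[of "(e + s *\<^sub>R Y)^n" "(e + (-s) *\<^sub>R Y)^n"] pw[OF conv[OF s]] pw[OF conv[of "-s"]] s
        by simp
      show "norm ((e + s *\<^sub>R W)^n - (e + (-s) *\<^sub>R W)^n) \<le> 2"
        using norm_triangle_ineq4[of "(e + s *\<^sub>R W)^n" "(e + (-s) *\<^sub>R W)^n"] pw[OF convW[OF s]] pw[OF convW[of "-s"]] s
        by simp
    qed auto
    finally have nG: "norm G \<le> 1" by simp
    have "G = (\<Sum>k\<le>n. cscale (of_nat (n choose k) * ((1/4) * ((complex_of_real s)^k - (- complex_of_real s)^k)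
        + (-\<i>/4) * ((\<i> * complex_of_real s)^k - (-\<i> * complex_of_real s)^k))) (Y^k))"
      unfolding G_def T_def binomC sum_cscale_diff cscale_sum_cscale sum_cscale_add
      by (intro sum.cong refl arg_cong2[where f=cscale]) (simp add: algebra_simps)
    also have "\<dots> = (\<Sum>k\<le>n. if k mod 4 = 1 then (real (n choose k) * s^k) *\<^sub>R Y^k else 0)"
      unfolding coeffc by (intro sum.cong refl) (simp add: cscale_nat_real flip: of_real_power)
    finally show ?thesis using nG by simp
  qed
  define n where "n = nat \<lceil>2/\<delta>\<rceil> + 1"
  have n1: "n \<ge> 1" by (simp add: n_def)
  have nbig: "real n * \<delta> > 2"
  proof -
    have "real (nat \<lceil>2/\<delta>\<rceil>) \<ge> 2/\<delta>" by linarith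
    then have "real n > 2/\<delta>" by (simp add: n_def)
    then show ?thesis using dpos by (simp add: field_simps)
  qed
  define s where "s = 2 / (real n * \<delta>)"
  have spos: "s > 0" using dpos n1 by (simp add: s_def)
  have sle: "s \<le> 1" using nbig by (simp add: s_def)
  have sd: "s * \<delta> = 2 / real n" using dpos by (simp add: s_def)
  define f where "f k = (if k mod 4 = 1 then (real (n choose k) * s^k) *\<^sub>R Y^k else 0)" for k
  have M: "norm (\<Sum>k\<le>n. f k) \<le> 1" unfolding f_def using main[OF n1, of s] spos sle by simp
  have split: "(\<Sum>k\<le>n. f k) = f 1 + (\<Sum>k\<in>{..n}-{1}. f k)"
    using n1 by (subst sum.remove[of _ 1]) auto
  have f1: "norm (f 1) = 2"
    using spos n1 dpos by (simp add: f_def \<delta>_def[symmetric] s_def)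
  have fk: "norm (f k) \<le> (if 5 \<le> k then 2^k / fact k else 0)" if k: "k \<in> {..n}-{1}" for k
  proof (cases "k mod 4 = 1")
    case True
    have "k \<noteq> 1" using k by simp
    then have k5: "k \<ge> 5" using True by presburger
    have "norm (f k) = real (n choose k) * s^k * norm (Y^k)" using True spos by (simp add: f_def)
    also have "\<dots> \<le> real (n choose k) * s^k * \<delta>^k"
      using spos by (intro mult_left_mono) (auto simp: \<delta>_def norm_power_ineq)
    also have "\<dots> = real (n choose k) * (2 / real n)^k" by (simp add: sd[symmetric] power_mult_distrib)
    also have "\<dots> \<le> 2^k / fact k"
    proof -
      have "real (n choose k) * fact k \<le> real n ^ k"
        using binomial_fact_pow[of n k] by (metis of_nat_fact of_nat_le_iff of_nat_mult of_nat_power)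
      then show ?thesis using n1 by (simp add: field_simps power_divide)
    qed
    finally show ?thesis using k5 by simp
  next
    case False
    then show ?thesis by (simp add: f_def)
  qed
  have "norm (\<Sum>k\<in>{..n}-{1}. f k) \<le> (\<Sum>k\<in>{..n}-{1}. if 5 \<le> k then 2^k / fact k else 0)"
    by (rule order_trans[OF norm_sum sum_mono]) (rule fk)
  also have "\<dots> \<le> (\<Sum>k\<le>n. if 5 \<le> k then 2^k / fact k else 0)"
    by (intro sum_mono2) auto
  also have "\<dots> \<le> 2/5" by (rule tail)
  finally have R: "norm (\<Sum>k\<in>{..n}-{1}. f k) \<le> 2/5" .
  have "norm (f 1) \<le> norm (\<Sum>k\<le>n. f k) + norm (\<Sum>k\<in>{..n}-{1}. f k)"
    unfolding split by (metis add_diff_cancel_right' norm_triangle_ineq4)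
  then show False using M R f1 by linarith
qed


lemma proj_compl: assumes "adj p = p" "p * p = (p::'a::cstar_algebra)"
  shows "adj (1 - p) = 1 - p" "(1 - p) * (1 - p) = 1 - p"
  using assms by (auto simp: algebra_simps)

lemma norm_PqP: assumes "adj P = P" "P * P = P" "adj q = q" "q * q = (q::'a::cstar_algebra)"
  shows "norm (P * q * P) \<le> 1"
proof -
  have "norm (P * q * P) \<le> norm P * norm q * norm P"
    by (metis mult_right_mono norm_ge_zero norm_mult_ineq order_trans)
  also have "\<dots> \<le> 1 * 1 * 1"
    using norm_proj[OF assms(1,2)] norm_proj[OF assms(3,4)]
    by (intro mult_mono) auto
  finally show ?thesis by simp
qed

lemma orth:
  fixes p :: "nat \<Rightarrow> 'a::cstar_algebra"
  assumes fin: "finite S" and proj: "\<And>l. l \<in> S \<Longrightarrow> adj (p l) = p l \<and> p l * p l = p l"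
    and sum1: "(\<Sum>l\<in>S. p l) = 1" and a: "a \<in> S" and b: "b \<in> S" and ab: "a \<noteq> b"
  shows "p a * p b = 0"
proof -
  define P where "P = p a"
  have aP: "adj P = P" and PP: "P * P = P" using proj[OF a] by (auto simp: P_def)
  have ab': "adj (p b) = p b" "p b * p b = p b" using proj[OF b] by auto
  define c where "c = P * p b * P"
  define R where "R = S - {a, b}"
  have finR: "finite R" using fin by (simp add: R_def)
  have "(\<Sum>l\<in>S. P * p l * P) = P * (\<Sum>l\<in>S. p l) * P"
    by (simp add: sum_distrib_left sum_distrib_right)
  also have "\<dots> = P" by (simp add: sum1 PP)
  finally have s1: "(\<Sum>l\<in>S. P * p l * P) = P" .
  have "(\<Sum>l\<in>S. P * p l * P) = P * p a * P + (P * p b * P + (\<Sum>l\<in>R. P * p l * P))"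
    using fin a b ab unfolding R_def
    by (simp add: sum.remove[of S a] sum.remove[of "S - {a}" b] Diff_insert2[symmetric] insert_commute)
  moreover have "P * p a * P = P" using PP by (simp add: P_def[symmetric])
  ultimately have "P + (c + (\<Sum>l\<in>R. P * p l * P)) = P" using s1 by (simp add: c_def)
  then have cR: "c = - (\<Sum>l\<in>R. P * p l * P)" by (simp add: add_eq_0_iff)
  have projR: "adj (1 - p l) = 1 - p l \<and> (1 - p l) * (1 - p l) = 1 - p l" if "l \<in> S" for l
    using proj_compl proj[OF that] by blast
  have c0: "c = 0"
  proof (cases "R = {}")
    case True then show ?thesis using cR by simp
  next
    case False
    define r where "r = real (card R)"
    have rpos: "r \<ge> 1" using False finR by (simp add: r_def Suc_le_eq card_gt_0_iff)
    define Y where "Y = (1/r) *\<^sub>R c"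
    have eY: "P * Y = Y" and Ye: "Y * P = Y" by (simp_all add: Y_def c_def mult.assoc[symmetric] PP)
      (simp add: mult.assoc PP)
    have aY: "adj Y = Y" by (simp add: Y_def c_def adj_mult aP ab' mult.assoc)
    have n1: "norm (P + Y) \<le> 1"
    proof -
      have "r *\<^sub>R P + c = (\<Sum>l\<in>R. P * (1 - p l) * P)"
        unfolding cR r_def by (simp add: sum_constant_scaleR[symmetric] algebra_simps sum_subtractf PP)
      have "P + Y = (1/r) *\<^sub>R (r *\<^sub>R P + c)" using rpos by (simp add: Y_def scaleR_add_right)
      also have "r *\<^sub>R P + c = (\<Sum>l\<in>R. P * (1 - p l) * P)"
        unfolding cR r_def by (simp add: sum_constant_scaleR[symmetric] algebra_simps sum_subtractf PP)
      finally have A: "norm (P + Y) = (1/r) * norm (\<Sum>l\<in>R. P * (1 - p l) * P)" using rpos by simp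
      have B: "norm (\<Sum>l\<in>R. P * (1 - p l) * P) \<le> r"
        unfolding r_def
        by (rule order_trans[OF norm_sum], rule order_trans[OF sum_mono[where g="\<lambda>_. 1"]], rule norm_PqP[OF aP PP])
           (use projR in \<open>auto simp: R_def\<close>)
      have "(1/r) * norm (\<Sum>l\<in>R. P * (1 - p l) * P) \<le> (1/r) * r"
        using B rpos by (intro mult_left_mono) auto
      then show ?thesis using A rpos by simp
    qed
    have n2: "norm (P - Y) \<le> 1"
    proof -
      have "P - Y = (1 - 1/r) *\<^sub>R P + (1/r) *\<^sub>R (P * (1 - p b) * P)"
        by (simp add: Y_def c_def algebra_simps PP)
      also have "norm \<dots> \<le> (1 - 1/r) * norm P + (1/r) * norm (P * (1 - p b) * P)"
        using rpos by (intro order_trans[OF norm_triangle_ineq]) simp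
      also have "\<dots> \<le> (1 - 1/r) * 1 + (1/r) * 1"
        using rpos norm_proj[OF aP PP] norm_PqP[OF aP PP projR[OF b, THEN conjunct1] projR[OF b, THEN conjunct2]]
        by (intro add_mono mult_left_mono) auto
      finally show ?thesis by simp
    qed
    have "Y = 0" using lemK[OF PP eY Ye aY aP n1 n2] .
    then show ?thesis using rpos by (simp add: Y_def)
  qed
  have "norm (p b * P) ^ 2 = norm (adj (p b * P) * (p b * P))" by (simp add: cstar_identity)
  also have "adj (p b * P) * (p b * P) = c"
  proof -
    have "p b * (p b * P) = p b * P" by (metis ab'(2) mult.assoc)
    then show ?thesis by (simp add: adj_mult aP ab' c_def mult.assoc)
  qed
  finally have "p b * P = 0" using c0 by simp
  then have "adj (p b * P) = 0" by simp
  then show ?thesis using aP by (simp add: adj_mult ab' P_def)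
qed

lemma relpow_sym:
  assumes "\<And>x y. (x, y) \<in> R \<Longrightarrow> (y, x) \<in> R"
  shows "(x, y) \<in> R ^^ m \<Longrightarrow> (y, x) \<in> R ^^ m"
proof (induction m arbitrary: y)
  case 0 then show ?case by simp
next
  case (Suc m)
  then obtain z where "(x, z) \<in> R ^^ m" "(z, y) \<in> R" by auto
  then show ?case using Suc.IH assms by (meson relpow_Suc_I2)
qed

locale gr =
  fixes n :: nat and E :: "nat \<Rightarrow> nat \<Rightarrow> bool"
  assumes G: "simple_connected_graph n E"
begin

abbreviation "V \<equiv> vertices n"
abbreviation "R \<equiv> edge_rel n E"
abbreviation "d \<equiv> gdist n E"

lemma Esym: "E x y \<Longrightarrow> E y x" using G by (simp add: simple_connected_graph_def)

lemma Rsym: "(x, y) \<in> R \<Longrightarrow> (y, x) \<in> R"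
  by (auto simp: edge_rel_def Esym)

lemma gd_ex: assumes "x \<in> V" "y \<in> V" shows "(x, y) \<in> R ^^ d x y"
proof -
  have "(x, y) \<in> R\<^sup>*" using G assms by (simp add: simple_connected_graph_def)
  then obtain m where "(x, y) \<in> R ^^ m" by (auto simp: rtrancl_power)
  then show ?thesis unfolding gdist_def by (rule LeastI)
qed

lemma gd_le: "(x, y) \<in> R ^^ m \<Longrightarrow> d x y \<le> m"
  unfolding gdist_def by (rule Least_le)

lemma gd_0: assumes "x \<in> V" "y \<in> V" shows "d x y = 0 \<longleftrightarrow> x = y"
proof
  assume "d x y = 0" then show "x = y" using gd_ex[OF assms] by simp
next
  assume "x = y" then show "d x y = 0" using gd_le[of x y 0] by simp
qed

lemma gd_sym: assumes "x \<in> V" "y \<in> V" shows "d x y = d y x"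
  using gd_le[OF relpow_sym[OF Rsym gd_ex[OF assms]]] gd_le[OF relpow_sym[OF Rsym gd_ex[OF assms(2,1)]]]
  by simp

lemma gd_tri: assumes "(x, x1) \<in> R" "x1 \<in> V" "y \<in> V" shows "d x y \<le> Suc (d x1 y)"
  using gd_le[OF relpow_Suc_I2[OF assms(1) gd_ex[OF assms(2,3)]]] .

lemma gd_step: assumes "x \<in> V" "y \<in> V" "d x y = Suc r"
  shows "\<exists>x1\<in>V. E x x1 \<and> d x1 y = r"
proof -
  have "(x, y) \<in> R ^^ Suc r" using gd_ex[OF assms(1,2)] assms(3) by simp
  then obtain x1 where x1: "(x, x1) \<in> R" "(x1, y) \<in> R ^^ r" by (metis relpow_Suc_D2)
  have V1: "x1 \<in> V" and E1: "E x x1" using x1(1) by (auto simp: edge_rel_def)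
  have "d x1 y \<le> r" using gd_le[OF x1(2)] .
  moreover have "Suc r \<le> Suc (d x1 y)" using gd_tri[OF x1(1) V1 assms(2)] assms(3) by simp
  ultimately show ?thesis using V1 E1 by auto
qed

end

locale qg = gr +
  fixes u :: "nat \<Rightarrow> nat \<Rightarrow> 'a::cstar_algebra"
  assumes Q: "qaut_relations n E u"
begin

lemma proj: "i \<in> V \<Longrightarrow> j \<in> V \<Longrightarrow> adj (u i j) = u i j \<and> u i j * u i j = u i j"
  using Q by (auto simp: qaut_relations_def)

lemma rowsum: "i \<in> V \<Longrightarrow> (\<Sum>l\<in>V. u i l) = 1"
  using Q by (simp add: qaut_relations_def)

lemma colsum: "i \<in> V \<Longrightarrow> (\<Sum>l\<in>V. u l i) = 1"
  using Q by (simp add: qaut_relations_def)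

lemma R3: "i \<in> V \<Longrightarrow> j \<in> V \<Longrightarrow> k \<in> V \<Longrightarrow> l \<in> V \<Longrightarrow> E i k \<noteq> E j l \<Longrightarrow> u i j * u k l = 0"
  using Q by (simp add: qaut_relations_def)

lemma finV: "finite V" by (simp add: vertices_def)

lemma roworth: "i \<in> V \<Longrightarrow> j \<in> V \<Longrightarrow> l \<in> V \<Longrightarrow> j \<noteq> l \<Longrightarrow> u i j * u i l = 0"
  using orth[of V "u i" j l] finV proj rowsum by blast

lemma dp_lt: "i \<in> V \<Longrightarrow> j \<in> V \<Longrightarrow> k \<in> V \<Longrightarrow> l \<in> V \<Longrightarrow> d i k = r \<Longrightarrow> r < d j l \<Longrightarrow> u i j * u k l = 0"
proof (induction r arbitrary: i j k l)
  case 0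
  then have "i = k" using gd_0 by simp
  moreover have "j \<noteq> l" using "0.prems"(2,4,6) gd_0[of j l] by auto
  ultimately show ?case using roworth 0 by simp
next
  case (Suc r)
  obtain i1 where i1: "i1 \<in> V" "E i i1" "d i1 k = r" using gd_step Suc.prems by blast
  have "u i j * u k l = u i j * (\<Sum>j1\<in>V. u i1 j1) * u k l" using rowsum[OF i1(1)] by simp
  also have "\<dots> = (\<Sum>j1\<in>V. u i j * u i1 j1 * u k l)" by (simp add: sum_distrib_left sum_distrib_right)
  also have "\<dots> = 0"
  proof (intro sum.neutral ballI)
    fix j1 assume j1: "j1 \<in> V"
    show "u i j * u i1 j1 * u k l = 0"
    proof (cases "E j j1")
      case False
      then have "u i j * u i1 j1 = 0" using R3[of i j i1 j1] Suc.prems i1 j1 by simp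
      then show ?thesis by simp
    next
      case True
      then have "(j, j1) \<in> R" using Suc.prems j1 by (simp add: edge_rel_def)
      then have "d j l \<le> Suc (d j1 l)" using gd_tri j1 Suc.prems by blast
      then have "r < d j1 l" using Suc.prems by simp
      then have "u i1 j1 * u k l = 0" using Suc.IH[of i1 j1 k l] i1 j1 Suc.prems by simp
      then show ?thesis by (simp add: mult.assoc)
    qed
  qed
  finally show ?case .
qed

end

lemma qaut_transpose: "qaut_relations n E u \<Longrightarrow> qaut_relations n E (\<lambda>a b. u b a)"
  unfolding qaut_relations_def by metis

context qg begin

lemma dp: assumes "i \<in> V" "j \<in> V" "k \<in> V" "l \<in> V" "d i k \<noteq> d j l"
  shows "u i j * u k l = 0"
proof (cases "d i k < d j l")
  case True then show ?thesis using dp_lt assms by blast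
next
  case False
  then have lt: "d j l < d i k" using assms by simp
  interpret T: qg n E "\<lambda>a b. u b a" by unfold_locales (rule qaut_transpose[OF Q])
  show ?thesis using T.dp_lt[OF assms(2,1,4,3) refl lt] by simp
qed

end

theorem lemma3p7:
  fixes n :: nat and E :: "nat \<Rightarrow> nat \<Rightarrow> bool"
    and u :: "nat \<Rightarrow> nat \<Rightarrow> 'a::cstar_algebra"
    and i j k l p q m s :: nat
  assumes "simple_connected_graph n E"
    and "qaut_relations n E u"
    and "i \<in> vertices n" "j \<in> vertices n" "k \<in> vertices n" "l \<in> vertices n"
    and "p \<in> vertices n" "q \<in> vertices n"
    and "gdist n E i k = m" "gdist n E j l = m"
    and "p \<noteq> j" "gdist n E p l = m"
    and "gdist n E q l = s" "gdist n E j q \<noteq> gdist n E q p"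
  shows "u i j * (\<Sum>t\<in>{t\<in>vertices n. gdist n E t j = m \<and> gdist n E t p = m \<and> gdist n E t q = s}. u k t) * u i p = 0
     \<and> ({t\<in>vertices n. gdist n E t q = s \<and> gdist n E t j = m \<and> gdist n E t p = m} = {l}
          \<longrightarrow> u i j * u k l * u i p = 0)"
proof -
  interpret qg n E u using assms(1,2) by unfold_locales
  note V = assms(3-8)
  have dik: "d i k = m" and dki: "d k i = m" using assms(9) gd_sym V by auto
  define T where "T = {t\<in>V. d t j = m \<and> d t p = m \<and> d t q = s}"
  define T' where "T' = {t\<in>V. d t q = s}"
  define A where "A = {a\<in>V. d k a = s}"
  have finT': "finite T'" and finA: "finite A" using finV by (auto simp: T'_def A_def)
  have TT': "T \<subseteq> T'" by (auto simp: T_def T'_def)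
  have s1: "u i j * (\<Sum>t\<in>T. u k t) * u i p = u i j * (\<Sum>t\<in>T'. u k t) * u i p"
  proof -
    have "(\<Sum>t\<in>T. u i j * u k t * u i p) = (\<Sum>t\<in>T'. u i j * u k t * u i p)"
    proof (rule sum.mono_neutral_left[OF finT' TT'], rule ballI)
      fix t assume t: "t \<in> T' - T"
      then have tV: "t \<in> V" by (simp add: T'_def)
      show "u i j * u k t * u i p = 0"
      proof (cases "d t j = m")
        case False
        then have "d i k \<noteq> d j t" using gd_sym tV V dik by auto
        then have "u i j * u k t = 0" using dp V tV by blast
        then show ?thesis by simp
      next
        case True
        then have "d t p \<noteq> m" using t by (auto simp: T_def T'_def)
        then have "d k i \<noteq> d t p" using dki by simp
        then have "u k t * u i p = 0" using dp V tV by blast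
        then show ?thesis by (simp add: mult.assoc)
      qed
    qed
    then show ?thesis by (simp add: sum_distrib_left sum_distrib_right)
  qed
  have s2: "(\<Sum>t\<in>T'. u k t) = (\<Sum>a\<in>A. u a q)"
  proof -
    have "(\<Sum>t\<in>T'. u k t) = (\<Sum>t\<in>T'. \<Sum>a\<in>V. u k t * u a q)"
      using colsum[OF V(6)] by (simp add: sum_distrib_left[symmetric])
    also have "\<dots> = (\<Sum>t\<in>T'. \<Sum>a\<in>A. u k t * u a q)"
    proof (rule sum.cong[OF refl])
      fix t assume t: "t \<in> T'"
      show "(\<Sum>a\<in>V. u k t * u a q) = (\<Sum>a\<in>A. u k t * u a q)"
      proof (rule sum.mono_neutral_right[OF finV], force simp: A_def, rule ballI)
        fix a assume a: "a \<in> V - A"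
        then have "d k a \<noteq> d t q" using t by (auto simp: A_def T'_def)
        then show "u k t * u a q = 0" using dp V t a by (auto simp: T'_def)
      qed
    qed
    also have "\<dots> = (\<Sum>a\<in>A. \<Sum>t\<in>T'. u k t * u a q)" by (rule sum.swap)
    also have "\<dots> = (\<Sum>a\<in>A. u a q)"
    proof (rule sum.cong[OF refl])
      fix a assume a: "a \<in> A"
      have "(\<Sum>t\<in>T'. u k t * u a q) = (\<Sum>t\<in>V. u k t * u a q)"
      proof (rule sum.mono_neutral_left[OF finV], force simp: T'_def, rule ballI)
        fix t assume t: "t \<in> V - T'"
        then have "d k a \<noteq> d t q" using a by (auto simp: A_def T'_def)
        then show "u k t * u a q = 0" using dp V t a by (auto simp: A_def)
      qed
      also have "\<dots> = u a q" using rowsum[OF V(3)] by (simp add: sum_distrib_right[symmetric])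
      finally show "(\<Sum>t\<in>T'. u k t * u a q) = u a q" .
    qed
    finally show ?thesis .
  qed
  have s3: "u i j * (\<Sum>a\<in>A. u a q) * u i p = 0"
  proof -
    have "u i j * (\<Sum>a\<in>A. u a q) * u i p = (\<Sum>a\<in>A. u i j * u a q * u i p)"
      by (simp add: sum_distrib_left sum_distrib_right)
    also have "\<dots> = 0"
    proof (intro sum.neutral ballI)
      fix a assume a: "a \<in> A"
      then have aV: "a \<in> V" by (simp add: A_def)
      show "u i j * u a q * u i p = 0"
      proof (cases "d i a = d j q")
        case False
        then have "u i j * u a q = 0" using dp V aV by blast
        then show ?thesis by simp
      next
        case True
        then have "d a i \<noteq> d q p" using assms(14) gd_sym V aV by auto
        then have "u a q * u i p = 0" using dp V aV by blast
        then show ?thesis by (simp add: mult.assoc)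
      qed
    qed
    finally show ?thesis .
  qed
  have part1: "u i j * (\<Sum>t\<in>T. u k t) * u i p = 0" using s1 s2 s3 by simp
  have Teq: "{t\<in>vertices n. gdist n E t q = s \<and> gdist n E t j = m \<and> gdist n E t p = m} = T"
    by (auto simp: T_def)
  show ?thesis
  proof
    show "u i j * (\<Sum>t\<in>{t\<in>vertices n. gdist n E t j = m \<and> gdist n E t p = m \<and> gdist n E t q = s}. u k t) * u i p = 0"
      using part1 by (simp add: T_def)
    show "{t\<in>vertices n. gdist n E t q = s \<and> gdist n E t j = m \<and> gdist n E t p = m} = {l} \<longrightarrow> u i j * u k l * u i p = 0"
      unfolding Teq
    proof
      assume "T = {l}"
      then show "u i j * u k l * u i p = 0" using part1 by simp
    qed
  qed
qed

end
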